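(* Let $\Phi:\{0,1\}^\omega\to\{0,1\}^\omega$ be a computable function and let $b$ be a $\Phi$-martingale. Suppose that for every $\sigma\in\{0,1\}^{<\omega}$ the limit $$b'(\sigma)=\lim_{n\to\infty}\sum_{\tau\in\{0,1\}^n} b(\tau)\,\frac{\mu([\sigma]\cap\Phi^{-1}([\tau]))}{\mu([\sigma])}$$ exists. Then $b'$ is a martingale, i.e. $b'(\sigma0)+b'(\sigma1)=2b'(\sigma)$ for all $\sigma$. Furthermore, if $b$ satisfies the saving property, then $\Phi^{-1}(\mathrm{Succ}(b))\subseteq \mathrm{Succ}(b')$.
   Context: $\mu$ is the uniform (fair-coin) measure on $\{0,1\}^\omega$ and $[\tau]$ is the set of sequences extending $\tau$. For a computable (total) $\Phi:\{0,1\}^\omega\to\{0,1\}^\omega$, a $\Phi$-martingale is a function $b:\{0,1\}^{<\omega}\to\mathbb{R}_{\ge0}$ with $b(\tau)\mu(\Phi^{-1}[\tau])=b(\tau0)\mu(\Phi^{-1}[\tau0])+b(\tau1)\mu(\Phi^{-1}[\tau1])$ for all $\tau$. $\mathrm{Succ}(b)=\{Y:\limsup_n b(Y\upharpoonright n)=\infty\}$ (for a function on strings in general). $b$ has the saving property if for every $k\in\omega$ and every $Y\in\mathrm{Succ}(b)$ there is a finite proper prefix $\tau$ of $Y$ such that $b(\rho)\ge k$ for every string $\rho$ extending $\tau$. *)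

theory Defs
  imports "HOL-Probability.Probability"
begin

definition cantor_mu :: "(nat \<Rightarrow> bool) measure" where
  "cantor_mu = PiM UNIV (\<lambda>_. measure_pmf (bernoulli_pmf (1/2)))"

definition cyl :: "bool list \<Rightarrow> (nat \<Rightarrow> bool) set" where
  "cyl \<sigma> = {X. \<forall>i<length \<sigma>. X i = \<sigma> ! i}"

definition pref :: "(nat \<Rightarrow> bool) \<Rightarrow> nat \<Rightarrow> bool list" where
  "pref X n = map X [0..<n]"

text \<open>Continuity of a map on Cantor space (every total computable map is continuous).\<close>
definition cantor_continuous :: "((nat \<Rightarrow> bool) \<Rightarrow> (nat \<Rightarrow> bool)) \<Rightarrow> bool" where
  "cantor_continuous \<Phi> \<longleftrightarrow>
     (\<forall>X n. \<exists>m. \<forall>Y. (\<forall>i<m. Y i = X i) \<longrightarrow> (\<forall>i<n. \<Phi> Y i = \<Phi> X i))"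

definition Phi_martingale ::
  "((nat \<Rightarrow> bool) \<Rightarrow> (nat \<Rightarrow> bool)) \<Rightarrow> (bool list \<Rightarrow> real) \<Rightarrow> bool" where
  "Phi_martingale \<Phi> b \<longleftrightarrow>
     (\<forall>\<tau>. b \<tau> \<ge> 0) \<and>
     (\<forall>\<tau>. b \<tau> * measure cantor_mu (\<Phi> -` cyl \<tau>)
          = b (\<tau> @ [False]) * measure cantor_mu (\<Phi> -` cyl (\<tau> @ [False]))
          + b (\<tau> @ [True]) * measure cantor_mu (\<Phi> -` cyl (\<tau> @ [True])))"

definition Succ :: "(bool list \<Rightarrow> real) \<Rightarrow> (nat \<Rightarrow> bool) set" where
  "Succ f = {Y. limsup (\<lambda>n. ereal (f (pref Y n))) = \<infinity>}"

definition saving_property :: "(bool list \<Rightarrow> real) \<Rightarrow> bool" where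
  "saving_property b \<longleftrightarrow>
     (\<forall>k::nat. \<forall>Y\<in>Succ b. \<exists>n. \<forall>\<rho>. (\<exists>\<rho>'. \<rho> = pref Y n @ \<rho>') \<longrightarrow> b \<rho> \<ge> real k)"

definition bprime_seq ::
  "((nat \<Rightarrow> bool) \<Rightarrow> (nat \<Rightarrow> bool)) \<Rightarrow> (bool list \<Rightarrow> real) \<Rightarrow> bool list \<Rightarrow> nat \<Rightarrow> real" where
  "bprime_seq \<Phi> b \<sigma> n =
     (\<Sum>\<tau>\<in>{\<tau>::bool list. length \<tau> = n}.
        b \<tau> * measure cantor_mu (cyl \<sigma> \<inter> \<Phi> -` cyl \<tau>) / measure cantor_mu (cyl \<sigma>))"

definition bprime ::
  "((nat \<Rightarrow> bool) \<Rightarrow> (nat \<Rightarrow> bool)) \<Rightarrow> (bool list \<Rightarrow> real) \<Rightarrow> bool list \<Rightarrow> real" where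
  "bprime \<Phi> b \<sigma> = lim (bprime_seq \<Phi> b \<sigma>)"

end

theory Submission imports Defs begin
interpretation CM: product_prob_space "\<lambda>_::nat. measure_pmf (bernoulli_pmf (1/2))" UNIV
  by unfold_locales
lemma space_cm[simp]: "space cantor_mu = UNIV"
  unfolding cantor_mu_def space_PiM by auto
lemma prob_cm: "prob_space cantor_mu"
  unfolding cantor_mu_def by (rule CM.P.prob_space_axioms)
lemma cyl_emb: "cyl \<sigma> = prod_emb UNIV (\<lambda>_::nat. measure_pmf (bernoulli_pmf (1/2))) {..<length \<sigma>} (Pi\<^sub>E {..<length \<sigma>} (\<lambda>i. {\<sigma>!i}))"
  apply (rule set_eqI)
  apply (simp add: cyl_def prod_emb_iff PiE_iff extensional_def Ball_def)
  done
lemma cyl_sets[measurable]: "cyl \<sigma> \<in> sets cantor_mu"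
  unfolding cyl_emb cantor_mu_def by (rule sets_PiM_I) auto
lemma cyl_measure: "measure cantor_mu (cyl \<sigma>) = (1/2) ^ length \<sigma>"
proof -
  have "measure cantor_mu (cyl \<sigma>) = (\<Prod>i\<in>{..<length \<sigma>}. measure (measure_pmf (bernoulli_pmf (1/2))) {\<sigma>!i})"
    unfolding cyl_emb cantor_mu_def by (rule CM.measure_PiM_emb) auto
  also have "\<dots> = (\<Prod>i\<in>{..<length \<sigma>}. 1/2)"
    by (intro prod.cong refl) (auto simp: measure_pmf_single split: bool.split)
  finally show ?thesis by simp
qed

lemma cyl_pref: "cyl (pref X m) = {Y. \<forall>i<m. Y i = X i}"
  by (auto simp: cyl_def pref_def)

lemma pre_sets:
  assumes c: "cantor_continuous \<Phi>"
  shows "\<Phi> -` cyl \<tau> \<in> sets cantor_mu"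
proof -
  have "\<Phi> -` cyl \<tau> = (\<Union>\<sigma>\<in>{\<sigma>. cyl \<sigma> \<subseteq> \<Phi> -` cyl \<tau>}. cyl \<sigma>)"
  proof
    show "\<Phi> -` cyl \<tau> \<subseteq> (\<Union>\<sigma>\<in>{\<sigma>. cyl \<sigma> \<subseteq> \<Phi> -` cyl \<tau>}. cyl \<sigma>)"
    proof
      fix X assume X: "X \<in> \<Phi> -` cyl \<tau>"
      obtain m where m: "\<And>Y. (\<forall>i<m. Y i = X i) \<Longrightarrow> (\<forall>i<length \<tau>. \<Phi> Y i = \<Phi> X i)"
        using c unfolding cantor_continuous_def by blast
      have "cyl (pref X m) \<subseteq> \<Phi> -` cyl \<tau>"
      proof
        fix Y assume "Y \<in> cyl (pref X m)"
        then have "\<forall>i<m. Y i = X i" by (simp add: cyl_pref)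
        then have "\<forall>i<length \<tau>. \<Phi> Y i = \<Phi> X i" by (rule m)
        moreover have "\<forall>i<length \<tau>. \<Phi> X i = \<tau>!i" using X by (simp add: cyl_def)
        ultimately show "Y \<in> \<Phi> -` cyl \<tau>" by (simp add: cyl_def)
      qed
      moreover have "X \<in> cyl (pref X m)" by (simp add: cyl_pref)
      ultimately show "X \<in> (\<Union>\<sigma>\<in>{\<sigma>. cyl \<sigma> \<subseteq> \<Phi> -` cyl \<tau>}. cyl \<sigma>)" by blast
    qed
  qed blast
  also have "\<dots> \<in> sets cantor_mu"
    by (rule sets.countable_UN) (use cyl_sets in blast)
  finally show ?thesis .
qed

lemma cyl_last: "X \<in> cyl (\<sigma> @ [c]) \<Longrightarrow> X (length \<sigma>) = c"
proof -
  assume "X \<in> cyl (\<sigma> @ [c])"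
  then have "\<forall>i<Suc (length \<sigma>). X i = (\<sigma> @ [c]) ! i" by (simp add: cyl_def)
  then have "X (length \<sigma>) = (\<sigma> @ [c]) ! length \<sigma>" by blast
  then show ?thesis by simp
qed

lemma cyl_split: "cyl \<sigma> = cyl (\<sigma> @ [False]) \<union> cyl (\<sigma> @ [True])"
  "cyl (\<sigma> @ [False]) \<inter> cyl (\<sigma> @ [True]) = {}"
proof -
  show "cyl \<sigma> = cyl (\<sigma> @ [False]) \<union> cyl (\<sigma> @ [True])"
  proof (rule set_eqI)
    fix X
    show "X \<in> cyl \<sigma> \<longleftrightarrow> X \<in> cyl (\<sigma> @ [False]) \<union> cyl (\<sigma> @ [True])"
      unfolding cyl_def by (cases "X (length \<sigma>)") (auto simp: nth_append less_Suc_eq)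
  qed
  show "cyl (\<sigma> @ [False]) \<inter> cyl (\<sigma> @ [True]) = {}"
  proof (rule equals0I)
    fix X assume "X \<in> cyl (\<sigma> @ [False]) \<inter> cyl (\<sigma> @ [True])"
    then have "X (length \<sigma>) = False" "X (length \<sigma>) = True"
      using cyl_last by blast+
    then show False by simp
  qed
qed


lemma meas_split:
  assumes "A \<in> sets cantor_mu"
  shows "measure cantor_mu (cyl \<sigma> \<inter> A) = measure cantor_mu (cyl (\<sigma>@[False]) \<inter> A) + measure cantor_mu (cyl (\<sigma>@[True]) \<inter> A)"
proof -
  interpret P: prob_space cantor_mu by (rule prob_cm)
  have e: "cyl \<sigma> \<inter> A = (cyl (\<sigma>@[False]) \<inter> A) \<union> (cyl (\<sigma>@[True]) \<inter> A)"
    using cyl_split(1)[of \<sigma>] by blast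
  have d: "(cyl (\<sigma>@[False]) \<inter> A) \<inter> (cyl (\<sigma>@[True]) \<inter> A) = {}"
    using cyl_split(2)[of \<sigma>] by blast
  show ?thesis unfolding e
    by (rule P.finite_measure_Union) (use assms d cyl_sets in auto)
qed

lemma bps_split:
  assumes c: "cantor_continuous \<Phi>"
  shows "bprime_seq \<Phi> b (\<sigma>@[False]) n + bprime_seq \<Phi> b (\<sigma>@[True]) n = 2 * bprime_seq \<Phi> b \<sigma> n"
proof -
  define h where "h = ((1::real)/2) ^ length \<sigma>"
  have h0: "h > 0" by (simp add: h_def)
  have mF: "measure cantor_mu (cyl (\<sigma>@[False])) = h/2" and mT: "measure cantor_mu (cyl (\<sigma>@[True])) = h/2"
    and m: "measure cantor_mu (cyl \<sigma>) = h" by (simp_all add: cyl_measure h_def)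
  have tm: "b \<tau> * measure cantor_mu (cyl (\<sigma>@[False]) \<inter> \<Phi> -` cyl \<tau>) / (h/2)
     + b \<tau> * measure cantor_mu (cyl (\<sigma>@[True]) \<inter> \<Phi> -` cyl \<tau>) / (h/2)
     = 2 * (b \<tau> * measure cantor_mu (cyl \<sigma> \<inter> \<Phi> -` cyl \<tau>) / h)" for \<tau>
  proof -
    have "measure cantor_mu (cyl \<sigma> \<inter> \<Phi> -` cyl \<tau>) = measure cantor_mu (cyl (\<sigma>@[False]) \<inter> \<Phi> -` cyl \<tau>) + measure cantor_mu (cyl (\<sigma>@[True]) \<inter> \<Phi> -` cyl \<tau>)"
      by (rule meas_split[OF pre_sets[OF c]])
    then show ?thesis using h0 by (simp add: divide_simps) (simp add: algebra_simps)
  qed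
  show ?thesis
    unfolding bprime_seq_def mF mT m sum.distrib[symmetric] sum_distrib_left
    by (rule sum.cong[OF refl]) (rule tm)
qed


lemma cyl_unique: "Z \<in> cyl \<tau> \<Longrightarrow> Z \<in> cyl \<tau>' \<Longrightarrow> length \<tau> = length \<tau>' \<Longrightarrow> \<tau> = \<tau>'"
  unfolding cyl_def by (auto intro!: nth_equalityI)

lemma partition_sum:
  assumes c: "cantor_continuous \<Phi>" and S: "S \<in> sets cantor_mu"
  shows "(\<Sum>\<tau>\<in>{\<tau>::bool list. length \<tau> = N}. measure cantor_mu (S \<inter> \<Phi> -` cyl \<tau>)) = measure cantor_mu S"
proof -
  interpret P: prob_space cantor_mu by (rule prob_cm)
  have U: "(\<Union>\<tau>\<in>{\<tau>::bool list. length \<tau> = N}. S \<inter> \<Phi> -` cyl \<tau>) = S"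
  proof
    show "S \<subseteq> (\<Union>\<tau>\<in>{\<tau>::bool list. length \<tau> = N}. S \<inter> \<Phi> -` cyl \<tau>)"
    proof
      fix Y assume "Y \<in> S"
      moreover have "\<Phi> Y \<in> cyl (pref (\<Phi> Y) N)" by (simp add: cyl_pref)
      moreover have "length (pref (\<Phi> Y) N) = N" by (simp add: pref_def)
      ultimately show "Y \<in> (\<Union>\<tau>\<in>{\<tau>::bool list. length \<tau> = N}. S \<inter> \<Phi> -` cyl \<tau>)" by blast
    qed
  qed blast
  have "measure cantor_mu (\<Union>\<tau>\<in>{\<tau>::bool list. length \<tau> = N}. S \<inter> \<Phi> -` cyl \<tau>)
      = (\<Sum>\<tau>\<in>{\<tau>::bool list. length \<tau> = N}. measure cantor_mu (S \<inter> \<Phi> -` cyl \<tau>))"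
  proof (rule P.finite_measure_finite_Union)
    show "finite {\<tau>::bool list. length \<tau> = N}" using finite_lists_length_eq[of "UNIV::bool set" N] by simp
    show "(\<lambda>\<tau>. S \<inter> \<Phi> -` cyl \<tau>) ` {\<tau>. length \<tau> = N} \<subseteq> sets cantor_mu"
      using S pre_sets[OF c] by blast
    show "disjoint_family_on (\<lambda>\<tau>. S \<inter> \<Phi> -` cyl \<tau>) {\<tau>. length \<tau> = N}"
      unfolding disjoint_family_on_def using cyl_unique by blast
  qed
  then show ?thesis using U by simp
qed

lemma bps_lower:
  assumes c: "cantor_continuous \<Phi>"
    and hb: "\<And>\<tau>. length \<tau> = N \<Longrightarrow> cyl \<sigma> \<inter> \<Phi> -` cyl \<tau> \<noteq> {} \<Longrightarrow> b \<tau> \<ge> k"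
  shows "bprime_seq \<Phi> b \<sigma> N \<ge> k"
proof -
  define h where "h = measure cantor_mu (cyl \<sigma>)"
  have h0: "h > 0" by (simp add: h_def cyl_measure)
  have "(\<Sum>\<tau>\<in>{\<tau>::bool list. length \<tau> = N}. k * measure cantor_mu (cyl \<sigma> \<inter> \<Phi> -` cyl \<tau>) / h)
      \<le> bprime_seq \<Phi> b \<sigma> N"
    unfolding bprime_seq_def h_def[symmetric]
  proof (rule sum_mono)
    fix \<tau> :: "bool list" assume "\<tau> \<in> {\<tau>. length \<tau> = N}"
    then have l: "length \<tau> = N" by simp
    show "k * measure cantor_mu (cyl \<sigma> \<inter> \<Phi> -` cyl \<tau>) / h \<le> b \<tau> * measure cantor_mu (cyl \<sigma> \<inter> \<Phi> -` cyl \<tau>) / h"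
    proof (cases "cyl \<sigma> \<inter> \<Phi> -` cyl \<tau> = {}")
      case True then show ?thesis by simp
    next
      case False
      then have "b \<tau> \<ge> k" using hb l by blast
      then show ?thesis using h0
        by (intro divide_right_mono mult_right_mono) (simp_all add: measure_nonneg)
    qed
  qed
  moreover have "(\<Sum>\<tau>\<in>{\<tau>::bool list. length \<tau> = N}. k * measure cantor_mu (cyl \<sigma> \<inter> \<Phi> -` cyl \<tau>) / h) = k"
  proof -
    have "(\<Sum>\<tau>\<in>{\<tau>::bool list. length \<tau> = N}. k * measure cantor_mu (cyl \<sigma> \<inter> \<Phi> -` cyl \<tau>) / h)
        = k * (\<Sum>\<tau>\<in>{\<tau>::bool list. length \<tau> = N}. measure cantor_mu (cyl \<sigma> \<inter> \<Phi> -` cyl \<tau>)) / h"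
      by (simp add: sum_distrib_left sum_divide_distrib)
    also have "\<dots> = k * h / h" by (simp add: partition_sum[OF c cyl_sets] h_def)
    also have "\<dots> = k" using h0 by simp
    finally show ?thesis .
  qed
  ultimately show ?thesis by simp
qed


lemma prefix_ext:
  assumes l: "length \<tau> \<ge> n" and Y: "Z \<in> cyl \<tau>" and agree: "\<forall>i<n. Z i = W i"
  shows "\<exists>\<rho>'. \<tau> = pref W n @ \<rho>'"
proof -
  have "take n \<tau> = pref W n"
  proof (rule nth_equalityI)
    show "length (take n \<tau>) = length (pref W n)" using l by (simp add: pref_def)
    fix i assume "i < length (take n \<tau>)"
    then have i: "i < n" "i < length \<tau>" using l by auto
    have "Z i = \<tau> ! i" using Y i by (simp add: cyl_def)
    then show "take n \<tau> ! i = pref W n ! i" using i agree by (simp add: pref_def)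
  qed
  then have "\<tau> = pref W n @ drop n \<tau>" by (metis append_take_drop_id)
  then show ?thesis by blast
qed

theorem lemmaL2:
  fixes \<Phi> :: "(nat \<Rightarrow> bool) \<Rightarrow> (nat \<Rightarrow> bool)" and b :: "bool list \<Rightarrow> real"
  assumes "cantor_continuous \<Phi>"
    and "Phi_martingale \<Phi> b"
    and "\<forall>\<sigma>. convergent (bprime_seq \<Phi> b \<sigma>)"
  shows "(\<forall>\<sigma>. bprime \<Phi> b (\<sigma> @ [False]) + bprime \<Phi> b (\<sigma> @ [True]) = 2 * bprime \<Phi> b \<sigma>)
       \<and> (saving_property b \<longrightarrow> \<Phi> -` Succ b \<subseteq> Succ (bprime \<Phi> b))"
proof
  note c = assms(1)
  have lim: "bprime_seq \<Phi> b \<sigma> \<longlonglongrightarrow> bprime \<Phi> b \<sigma>" for \<sigma>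
    using assms(3) unfolding bprime_def convergent_LIMSEQ_iff by blast
  show "\<forall>\<sigma>. bprime \<Phi> b (\<sigma> @ [False]) + bprime \<Phi> b (\<sigma> @ [True]) = 2 * bprime \<Phi> b \<sigma>"
  proof
    fix \<sigma>
    have "(\<lambda>n. bprime_seq \<Phi> b (\<sigma>@[False]) n + bprime_seq \<Phi> b (\<sigma>@[True]) n) \<longlonglongrightarrow> bprime \<Phi> b (\<sigma> @ [False]) + bprime \<Phi> b (\<sigma> @ [True])"
      by (intro tendsto_add lim)
    moreover have "(\<lambda>n. bprime_seq \<Phi> b (\<sigma>@[False]) n + bprime_seq \<Phi> b (\<sigma>@[True]) n) \<longlonglongrightarrow> 2 * bprime \<Phi> b \<sigma>"
      unfolding bps_split[OF c] by (intro tendsto_mult_left lim)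
    ultimately show "bprime \<Phi> b (\<sigma> @ [False]) + bprime \<Phi> b (\<sigma> @ [True]) = 2 * bprime \<Phi> b \<sigma>"
      by (rule LIMSEQ_unique)
  qed
  show "saving_property b \<longrightarrow> \<Phi> -` Succ b \<subseteq> Succ (bprime \<Phi> b)"
  proof (intro impI subsetI)
    assume sp: "saving_property b"
    fix X assume "X \<in> \<Phi> -` Succ b"
    then have XS: "\<Phi> X \<in> Succ b" by simp
    have "((\<lambda>n. ereal (bprime \<Phi> b (pref X n))) \<longlongrightarrow> \<infinity>) sequentially"
      unfolding tendsto_PInfty
    proof
      fix r :: real
      obtain k :: nat where rk: "r < real k" using reals_Archimedean2 by blast
      obtain n where hn: "\<And>\<rho>. (\<exists>\<rho>'. \<rho> = pref (\<Phi> X) n @ \<rho>') \<Longrightarrow> b \<rho> \<ge> real k"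
        using sp XS unfolding saving_property_def by blast
      obtain m where hm: "\<And>Y. (\<forall>i<m. Y i = X i) \<Longrightarrow> (\<forall>i<n. \<Phi> Y i = \<Phi> X i)"
        using c unfolding cantor_continuous_def by blast
      show "\<forall>\<^sub>F x in sequentially. ereal r < ereal (bprime \<Phi> b (pref X x))"
      proof (rule eventually_sequentiallyI)
        fix m' assume mm: "m \<le> m'"
        have "real k \<le> bprime \<Phi> b (pref X m')"
        proof (rule LIMSEQ_le_const[OF lim], intro exI allI impI)
          fix N assume nN: "n \<le> N"
          show "real k \<le> bprime_seq \<Phi> b (pref X m') N"
          proof (rule bps_lower[OF c])
            fix \<tau> :: "bool list" assume l: "length \<tau> = N" and ne: "cyl (pref X m') \<inter> \<Phi> -` cyl \<tau> \<noteq> {}"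
            then obtain Y where Y1: "Y \<in> cyl (pref X m')" and Y2: "\<Phi> Y \<in> cyl \<tau>" by blast
            have "\<forall>i<m. Y i = X i" using Y1 mm by (simp add: cyl_pref)
            then have "\<forall>i<n. \<Phi> Y i = \<Phi> X i" by (rule hm)
            then have "\<exists>\<rho>'. \<tau> = pref (\<Phi> X) n @ \<rho>'"
              using prefix_ext[of n \<tau> "\<Phi> Y" "\<Phi> X"] l nN Y2 by simp
            then show "b \<tau> \<ge> real k" by (rule hn)
          qed
        qed
        then show "ereal r < ereal (bprime \<Phi> b (pref X m'))" using rk by simp
      qed
    qed
    then have "limsup (\<lambda>n. ereal (bprime \<Phi> b (pref X n))) = \<infinity>"
      by (intro lim_imp_Limsup) simp_all
    then show "X \<in> Succ (bprime \<Phi> b)" by (simp add: Succ_def)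
  qed
qed

end
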